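(* Let $(K(n,m),{\bf p},{\bf q})$ be a complete bipartite framework in $\mathbb R^d$ whose configuration $({\bf p},{\bf q})$ has affine span of dimension at most $n+m-2$. If ${\bf p}$ and ${\bf q}$ are strictly separated by a quadric, then $(K(n,m),{\bf p},{\bf q})$ is not universally rigid.
   Context: A complete bipartite framework $(K(n,m),{\bf p},{\bf q})$ in $\mathbb R^d$ consists of points ${\bf p}=({\bf p}_1,\dots,{\bf p}_n)$ and ${\bf q}=({\bf q}_1,\dots,{\bf q}_m)$ in $\mathbb R^d$ (the two vertex classes), with a bar joining ${\bf p}_i$ and ${\bf q}_j$ for every $i,j$ and no other bars. A framework $(G,{\bf p})$ (graph $G$ on vertices $1,\dots,N$, points ${\bf p}_i\in\mathbb R^d$) is universally rigid if for every $D$ and every configuration ${\bf p}'$ in $\mathbb R^D$ with $|{\bf p}'_i-{\bf p}'_j|=|{\bf p}_i-{\bf p}_j|$ for all edges $\{i,j\}$ of $G$, one has $|{\bf p}'_i-{\bf p}'_j|=|{\bf p}_i-{\bf p}_j|$ for all pairs $i,j$. For ${\bf x}\in\mathbb R^d$ let $\hat{\bf x}\in\mathbb R^{d+1}$ be ${\bf x}$ with a $1$ appended as last coordinate. ${\bf p}$ and ${\bf q}$ are strictly separated by a quadric if there is a symmetric $(d+1)\times(d+1)$ real matrix $A$ with $\hat{\bf q}_j^tA\hat{\bf q}_j<0<\hat{\bf p}_i^tA\hat{\bf p}_i$ for all $i=1,\dots,n$, $j=1,\dots,m$. *)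

theory Defs
  imports "HOL-Analysis.Analysis"
begin

text \<open>Euclidean distance in R^D, points of R^D represented as functions nat => real
  (only coordinates 0..D-1 matter).\<close>
definition distD :: "nat \<Rightarrow> (nat \<Rightarrow> real) \<Rightarrow> (nat \<Rightarrow> real) \<Rightarrow> real" where
  "distD D x y = sqrt (\<Sum>k<D. (x k - y k)^2)"

definition universally_rigid ::
  "'v set \<Rightarrow> ('v \<times> 'v) set \<Rightarrow> ('v \<Rightarrow> real^'d) \<Rightarrow> bool" where
  "universally_rigid V E P \<longleftrightarrow>
     (\<forall>(D::nat) (P'::'v \<Rightarrow> nat \<Rightarrow> real).
        (\<forall>(u,v)\<in>E. distD D (P' u) (P' v) = dist (P u) (P v)) \<longrightarrow>
        (\<forall>u\<in>V. \<forall>v\<in>V. distD D (P' u) (P' v) = dist (P u) (P v)))"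

definition KV :: "nat \<Rightarrow> nat \<Rightarrow> (nat + nat) set" where
  "KV n m = Inl ` {..<n} \<union> Inr ` {..<m}"

definition KE :: "nat \<Rightarrow> nat \<Rightarrow> ((nat + nat) \<times> (nat + nat)) set" where
  "KE n m = {(Inl i, Inr j) | i j. i < n \<and> j < m}"

definition bip_config :: "(nat \<Rightarrow> 'a) \<Rightarrow> (nat \<Rightarrow> 'a) \<Rightarrow> nat + nat \<Rightarrow> 'a" where
  "bip_config p q v = (case v of Inl i \<Rightarrow> p i | Inr j \<Rightarrow> q j)"

text \<open>Homogenisation x |-> (x,1) in R^(d+1); the extra coordinate is indexed by None.\<close>
definition hat :: "real^'d \<Rightarrow> real^('d option)" where
  "hat x = (\<chi> i. case i of None \<Rightarrow> 1 | Some j \<Rightarrow> x $ j)"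

definition strictly_separated_by_quadric ::
  "nat \<Rightarrow> nat \<Rightarrow> (nat \<Rightarrow> real^'d) \<Rightarrow> (nat \<Rightarrow> real^'d) \<Rightarrow> bool" where
  "strictly_separated_by_quadric n m p q \<longleftrightarrow>
     (\<exists>A :: real^('d option)^('d option). transpose A = A \<and>
        (\<forall>i<n. hat (p i) \<bullet> (A *v hat (p i)) > 0) \<and>
        (\<forall>j<m. hat (q j) \<bullet> (A *v hat (q j)) < 0))"

end

theory Submission
  imports Defs
begin

definition Uq :: "real^('d option)^('d option) \<Rightarrow> real^'d \<Rightarrow> real^'d" where
  "Uq A x = (\<chi> j. (A *v hat x) $ Some j)"

definition Qf :: "real^('d option)^('d option) \<Rightarrow> real^'d \<Rightarrow> real" where
  "Qf A x = hat x \<bullet> (A *v hat x)"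

lemma sum_option_univ:
  "(\<Sum>i\<in>(UNIV::'a::finite option set). g i) = g None + (\<Sum>j\<in>UNIV. g (Some j))"
proof -
  have "(\<Sum>i\<in>(UNIV::'a option set). g i) = (\<Sum>i\<in>insert None (range Some). g i)"
    by (simp add: UNIV_option_conv)
  also have "\<dots> = g None + (\<Sum>i\<in>range Some. g i)"
    by (subst sum.insert) auto
  also have "(\<Sum>i\<in>range Some. g i) = (\<Sum>j\<in>UNIV. g (Some j))"
    by (subst sum.reindex) (auto simp: inj_def)
  finally show ?thesis .
qed

lemma sym_dot:
  assumes "transpose A = A"
  shows "x \<bullet> (A *v y) = y \<bullet> (A *v (x::real^'n::finite))"
proof -
  have "x \<bullet> (A *v y) = (x v* A) \<bullet> y" by (simp add: dot_lmul_matrix)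
  also have "x v* A = A *v x" using vector_transpose_matrix[of x A] assms by simp
  finally show ?thesis by (simp add: inner_commute)
qed

lemma key_identity:
  assumes "transpose A = A"
  shows "(p - q) \<bullet> (Uq A p + Uq A q) = Qf A p - Qf A q"
proof -
  let ?w = "A *v (hat p + hat q)"
  have "(hat p - hat q) \<bullet> ?w = (p - q) \<bullet> (Uq A p + Uq A q)"
    unfolding inner_vec_def sum_option_univ
    by (simp add: hat_def Uq_def matrix_vector_right_distrib)
  moreover have "(hat p - hat q) \<bullet> ?w = Qf A p - Qf A q"
    using sym_dot[OF assms, of "hat p" "hat q"]
    by (simp add: Qf_def matrix_vector_right_distrib inner_diff_left inner_add_right)
  ultimately show ?thesis by simp
qed

lemma alg:
  fixes P Q U V :: "'a::real_inner"
  assumes "(P - Q) \<bullet> (U + V) = a - b"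
  shows "norm ((P - s *\<^sub>R U) - (Q + s *\<^sub>R V))^2 + norm (s *\<^sub>R U - s *\<^sub>R V)^2
     + s * (2*a - 2 * s * norm U^2) + s * (-2*b - 2 * s * norm V^2) = norm (P - Q)^2"
proof -
  have "(P - Q) \<bullet> U + (P - Q) \<bullet> V = a - b" using assms by (simp add: inner_add_right)
  then show ?thesis
    unfolding power2_norm_eq_inner
    apply (simp add: inner_diff_left inner_diff_right inner_add_left inner_add_right
        inner_commute algebra_simps)
    apply (drule arg_cong[where f="\<lambda>x. 2 * s * x"])
    apply (simp add: algebra_simps)
    done
qed

definition emb :: "nat \<Rightarrow> (nat \<Rightarrow> 'd) \<Rightarrow> real^'d \<Rightarrow> real^'d \<Rightarrow> real \<Rightarrow> real \<Rightarrow> nat \<Rightarrow> real" where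
  "emb d f x y a b k = (if k < d then x$(f k) else if k < 2*d then y$(f (k-d))
     else if k = 2*d then a else if k = 2*d+1 then b else 0)"

lemma sum_split_nat: "(\<Sum>k<(a::nat)+b. (g k::real)) = (\<Sum>k<a. g k) + (\<Sum>k<b. g (a+k)) "
  by (induction b) auto

lemma norm_sq_vec: "norm (x - x')^2 = (\<Sum>i\<in>UNIV. (x$i - (x'::real^'d)$i)^2)"
  unfolding power2_norm_eq_inner inner_vec_def by (simp add: power2_eq_square)

lemma sum_bij_vec:
  assumes "bij_betw f {..<d} (UNIV::'d::finite set)"
  shows "(\<Sum>k<d. g (f k)) = (\<Sum>i\<in>UNIV. (g i :: real))"
  using sum.reindex_bij_betw[OF assms, of g] by simp

lemma emb_dist:
  assumes "bij_betw f {..<d} (UNIV::'d::finite set)"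
  shows "distD (2*d+2) (emb d f x y a b) (emb d f x' y' a' b') =
    sqrt (norm (x - x')^2 + norm (y - y')^2 + (a - a')^2 + (b - b')^2)"
proof -
  let ?g = "\<lambda>k. (emb d f x y a b k - emb d f x' y' a' b' k)^2"
  have "(\<Sum>k<2*d+2. ?g k) = (\<Sum>k<d+d. ?g k) + ?g (2*d) + ?g (2*d+1)"
    by (simp add: mult_2)
  also have "(\<Sum>k<d+d. ?g k) = (\<Sum>k<d. ?g k) + (\<Sum>k<d. ?g (d+k))"
    by (rule sum_split_nat)
  also have "(\<Sum>k<d. ?g k) = (\<Sum>k<d. (x$(f k) - x'$(f k))^2)"
    by (rule sum.cong) (auto simp: emb_def)
  also have "\<dots> = norm (x - x')^2"
    using sum_bij_vec[OF assms, of "\<lambda>i. (x$i - x'$i)^2"] norm_sq_vec[of x x'] by simp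
  also have "(\<Sum>k<d. ?g (d+k)) = (\<Sum>k<d. (y$(f k) - y'$(f k))^2)"
    by (rule sum.cong) (auto simp: emb_def)
  also have "\<dots> = norm (y - y')^2"
    using sum_bij_vec[OF assms, of "\<lambda>i. (y$i - y'$i)^2"] norm_sq_vec[of y y'] by simp
  also have "?g (2*d) = (a - a')^2" by (simp add: emb_def)
  also have "?g (2*d+1) = (b - b')^2" by (simp add: emb_def)
  finally show ?thesis unfolding distD_def by (simp add: algebra_simps)
qed

lemma sqrt_sq_mult: "0 \<le> s \<Longrightarrow> (sqrt s * t)^2 = s * t^2"
  by (simp add: power_mult_distrib)

lemma two_sign:
  assumes "s > 0" "a > 0" "b > 0"
    and "sqrt (R + (sqrt s * a * 1 - sqrt s * b)^2) = sqrt (R + (sqrt s * a * (-1) - sqrt s * b)^2)"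
  shows False
proof -
  have "(sqrt s * a * 1 - sqrt s * b)^2 = (sqrt s * a * (-1) - sqrt s * b)^2"
    using assms(4) by simp
  then have "(sqrt s * (a - b))^2 = (sqrt s * (a + b))^2"
    by (simp add: algebra_simps power2_eq_square)
  then have "s * (a - b)^2 = s * (a + b)^2"
    using assms(1) by (simp add: sqrt_sq_mult)
  then have "(a - b)^2 = (a + b)^2" using assms(1) by simp
  then have "a * b = 0" by (simp add: power2_eq_square algebra_simps)
  then show False using assms by simp
qed

theorem mainTheorem1:
  fixes n m :: nat and p q :: "nat \<Rightarrow> real^'d"
  assumes "n \<ge> 1" and "m \<ge> 1"
    and "aff_dim (p ` {..<n} \<union> q ` {..<m}) \<le> int n + int m - 2"
    and "strictly_separated_by_quadric n m p q"
  shows "\<not> universally_rigid (KV n m) (KE n m) (bip_config p q)"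
proof
  assume UR: "universally_rigid (KV n m) (KE n m) (bip_config p q)"
  obtain A where symA: "transpose A = A"
    and posA: "\<forall>i<n. hat (p i) \<bullet> (A *v hat (p i)) > 0"
    and negA: "\<forall>j<m. hat (q j) \<bullet> (A *v hat (q j)) < 0"
    using assms(4) unfolding strictly_separated_by_quadric_def by blast
  define Q where "Q = Qf A"
  have Qp: "\<And>i. i < n \<Longrightarrow> Q (p i) > 0" using posA by (simp add: Q_def Qf_def)
  have Qq: "\<And>j. j < m \<Longrightarrow> Q (q j) < 0" using negA by (simp add: Q_def Qf_def)
  define u where "u i = Uq A (p i)" for i
  define v where "v j = Uq A (q j)" for j
  have key: "\<And>i j. (p i - q j) \<bullet> (u i + v j) = Q (p i) - Q (q j)"
    using key_identity[OF symA] by (simp add: u_def v_def Q_def)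
  have nm: "n \<ge> 2 \<or> m \<ge> 2"
  proof (rule ccontr)
    assume "\<not> (n \<ge> 2 \<or> m \<ge> 2)"
    then have "n = 1" "m = 1" using assms(1,2) by auto
    then have "p ` {..<n} \<union> q ` {..<m} = {p 0, q 0}" by auto
    then have "aff_dim {p 0, q 0} \<le> 0" using assms(3) \<open>n = 1\<close> \<open>m = 1\<close> by simp
    then have "p 0 = q 0" by (simp add: aff_dim_2 split: if_splits)
    then show False using Qp[of 0] Qq[of 0] \<open>n = 1\<close> \<open>m = 1\<close> by simp
  qed
  have lim: "\<And>c::real. ((\<lambda>s. s * c) \<longlongrightarrow> 0) (at_right 0)"
  proof -
    fix c :: real
    have "((\<lambda>s. s * c) \<longlongrightarrow> 0 * c) (at_right 0)" by (intro tendsto_intros)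
    then show "((\<lambda>s. s * c) \<longlongrightarrow> 0) (at_right 0)" by simp
  qed
  have ev: "\<forall>\<^sub>F s in at_right 0. 0 < s \<and> (\<forall>i\<in>{..<n}. s * norm (u i)^2 < Q (p i))
      \<and> (\<forall>j\<in>{..<m}. s * norm (v j)^2 < - Q (q j))"
  proof (intro eventually_conj eventually_at_right_less eventually_ball_finite ballI)
    show "finite {..<n}" "finite {..<m}" by auto
  next
    fix i assume "i \<in> {..<n}"
    then show "\<forall>\<^sub>F s in at_right 0. s * norm (u i)^2 < Q (p i)"
      using order_tendstoD(2)[OF lim Qp] by auto
  next
    fix j assume "j \<in> {..<m}"
    then show "\<forall>\<^sub>F s in at_right 0. s * norm (v j)^2 < - Q (q j)"
      using order_tendstoD(2)[OF lim, of "- Q (q j)"] Qq by auto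
  qed
  then obtain s where spos: "0 < s" and su: "\<And>i. i < n \<Longrightarrow> s * norm (u i)^2 < Q (p i)"
    and sv: "\<And>j. j < m \<Longrightarrow> s * norm (v j)^2 < - Q (q j)"
    using eventually_happens[OF ev] trivial_limit_at_right_real by auto
  define \<alpha> where "\<alpha> i = sqrt (2 * Q (p i) - 2 * s * norm (u i)^2)" for i
  define \<beta> where "\<beta> j = sqrt (- 2 * Q (q j) - 2 * s * norm (v j)^2)" for j
  have \<alpha>sq: "\<And>i. i < n \<Longrightarrow> (\<alpha> i)^2 = 2 * Q (p i) - 2 * s * norm (u i)^2"
  proof -
    fix i assume "i < n" then have "s * norm (u i)^2 < Q (p i)" by (rule su)
    then show "(\<alpha> i)^2 = 2 * Q (p i) - 2 * s * norm (u i)^2" unfolding \<alpha>_def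
      by (intro real_sqrt_pow2) linarith
  qed
  have \<beta>sq: "\<And>j. j < m \<Longrightarrow> (\<beta> j)^2 = - 2 * Q (q j) - 2 * s * norm (v j)^2"
  proof -
    fix j assume "j < m" then have "s * norm (v j)^2 < - Q (q j)" by (rule sv)
    then show "(\<beta> j)^2 = - 2 * Q (q j) - 2 * s * norm (v j)^2" unfolding \<beta>_def
      by (intro real_sqrt_pow2) linarith
  qed
  have \<alpha>pos: "\<And>i. i < n \<Longrightarrow> \<alpha> i > 0"
  proof -
    fix i assume "i < n" then have "s * norm (u i)^2 < Q (p i)" by (rule su)
    then show "\<alpha> i > 0" unfolding \<alpha>_def by (intro real_sqrt_gt_zero) linarith
  qed
  have \<beta>pos: "\<And>j. j < m \<Longrightarrow> \<beta> j > 0"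
  proof -
    fix j assume "j < m" then have "s * norm (v j)^2 < - Q (q j)" by (rule sv)
    then show "\<beta> j > 0" unfolding \<beta>_def by (intro real_sqrt_gt_zero) linarith
  qed
  define d where "d = CARD('d)"
  obtain f where bij: "bij_betw f {..<d} (UNIV::'d set)"
    using ex_bij_betw_nat_finite[of "UNIV::'d set"] by (auto simp: d_def lessThan_atLeast0)
  define P' where "P' c w = (case w of
      Inl i \<Rightarrow> emb d f (p i - s *\<^sub>R u i) (s *\<^sub>R u i) (sqrt s * \<alpha> i * (if i = 0 then c else 1)) 0
    | Inr j \<Rightarrow> emb d f (q j + s *\<^sub>R v j) (s *\<^sub>R v j) 0 (sqrt s * \<beta> j * (if j = 0 then c else 1)))"
    for c :: real and w
  have sgn: "\<And>c::real. \<And>k::nat. c^2 = 1 \<Longrightarrow> (if k = 0 then c else 1)^2 = 1" by simp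
  have edges: "\<forall>(x,y)\<in>KE n m. distD (2*d+2) (P' c x) (P' c y) = dist (bip_config p q x) (bip_config p q y)"
    if c2: "c^2 = 1" for c :: real
  proof -
   have main: "distD (2*d+2) (P' c (Inl i)) (P' c (Inr j)) = dist (p i) (q j)" if ij: "i < n" "j < m" for i j
   proof -
    let ?a = "sqrt s * \<alpha> i * (if i = 0 then c else 1)"
    let ?b = "sqrt s * \<beta> j * (if j = 0 then c else 1)"
    have a2: "(?a - 0)^2 = s * (2 * Q (p i) - 2 * s * norm (u i)^2)"
      using sqrt_sq_mult[of s "\<alpha> i * (if i = 0 then c else 1)"] spos \<alpha>sq[OF ij(1)] sgn[OF c2, of i]
      by (simp add: power_mult_distrib mult.assoc)
    have b2: "(0 - ?b)^2 = s * (- 2 * Q (q j) - 2 * s * norm (v j)^2)"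
      using sqrt_sq_mult[of s "\<beta> j * (if j = 0 then c else 1)"] spos \<beta>sq[OF ij(2)] sgn[OF c2, of j]
      by (simp add: power_mult_distrib mult.assoc)
    have "distD (2*d+2) (P' c (Inl i)) (P' c (Inr j)) =
       sqrt (norm ((p i - s *\<^sub>R u i) - (q j + s *\<^sub>R v j))^2 + norm (s *\<^sub>R u i - s *\<^sub>R v j)^2
        + (?a - 0)^2 + (0 - ?b)^2)"
      unfolding P'_def using emb_dist[OF bij] by simp
    also have "\<dots> = sqrt (norm (p i - q j)^2)"
      unfolding a2 b2 by (simp only: alg[OF key[of i j], of s])
    also have "\<dots> = dist (p i) (q j)" by (simp add: dist_norm)
    finally show ?thesis .
   qed
   show ?thesis using main by (auto simp: KE_def bip_config_def)
  qed
  have all: "\<forall>x\<in>KV n m. \<forall>y\<in>KV n m. distD (2*d+2) (P' c x) (P' c y) = dist (bip_config p q x) (bip_config p q y)"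
    if "c^2 = 1" for c :: real
    using UR edges[OF that] unfolding universally_rigid_def by blast
  show False
  proof (cases "n \<ge> 2")
    case True
    then have mem: "Inl 0 \<in> KV n m" "Inl 1 \<in> KV n m" by (auto simp: KV_def)
    let ?R = "norm ((p 0 - s *\<^sub>R u 0) - (p 1 - s *\<^sub>R u 1))^2 + norm (s *\<^sub>R u 0 - s *\<^sub>R u 1)^2"
    have D: "distD (2*d+2) (P' c (Inl 0)) (P' c (Inl 1)) = sqrt (?R + (sqrt s * \<alpha> 0 * c - sqrt s * \<alpha> 1)^2)" for c
      unfolding P'_def using emb_dist[OF bij] by simp
    have eq: "sqrt (?R + (sqrt s * \<alpha> 0 * 1 - sqrt s * \<alpha> 1)^2) = sqrt (?R + (sqrt s * \<alpha> 0 * (-1) - sqrt s * \<alpha> 1)^2)"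
      using all[of 1] all[of "-1"] mem D[of 1] D[of "-1"] by (metis power2_minus power_one)
    have "0 < n" "1 < n" using True by auto
    show False by (rule two_sign[OF spos \<alpha>pos[OF \<open>0 < n\<close>] \<alpha>pos[OF \<open>1 < n\<close>] eq])
  next
    case False
    then have "m \<ge> 2" using nm by simp
    then have mem: "Inr 0 \<in> KV n m" "Inr 1 \<in> KV n m" by (auto simp: KV_def)
    let ?R = "norm ((q 0 + s *\<^sub>R v 0) - (q 1 + s *\<^sub>R v 1))^2 + norm (s *\<^sub>R v 0 - s *\<^sub>R v 1)^2"
    have D: "distD (2*d+2) (P' c (Inr 0)) (P' c (Inr 1)) = sqrt (?R + (sqrt s * \<beta> 0 * c - sqrt s * \<beta> 1)^2)" for c
      unfolding P'_def using emb_dist[OF bij] by simp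
    have eq: "sqrt (?R + (sqrt s * \<beta> 0 * 1 - sqrt s * \<beta> 1)^2) = sqrt (?R + (sqrt s * \<beta> 0 * (-1) - sqrt s * \<beta> 1)^2)"
      using all[of 1] all[of "-1"] mem D[of 1] D[of "-1"] by (metis power2_minus power_one)
    have "0 < m" "1 < m" using \<open>m \<ge> 2\<close> by auto
    show False by (rule two_sign[OF spos \<beta>pos[OF \<open>0 < m\<close>] \<beta>pos[OF \<open>1 < m\<close>] eq])
  qed
qed

end
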